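(* Let $b\ge 1$ and let $D_1(l),\dots,D_b(l)$ and $D_1(l+1),\dots,D_b(l+1)$ be real numbers such that, for each level $m\in\{l,l+1\}$, the numbers $D_1(m),\dots,D_b(m)$ are nonzero with pairwise distinct absolute values, and $D_i(l+1)\le D_i(l)$ for all $i$. For $m\in\{l,l+1\}$ let $T^+(m)=\sum_{i=1}^b R_i(m)\mathbf{1}\{D_i(m)>0\}$, where $R_i(m)$ is the rank of $|D_i(m)|$ among $\{|D_1(m)|,\dots,|D_b(m)|\}$ (rank $1$ for the smallest), and let $P(m)=\{i:D_i(m)>0\}$. If $P(l+1)\subsetneq P(l)$, then $T^+(l+1)<T^+(l)$.
   Context: $T^+(m)$ is the Wilcoxon signed-rank (positive rank sum) statistic of the values $D_1(m),\dots,D_b(m)$. *)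

theory Defs
  imports Complex_Main
begin

text \<open>Values D_1,...,D_b are given as a function x :: nat => real on the index set {1..b}.
  The rank of |x i| among |x 1|,...,|x b| (rank 1 for the smallest; values assumed distinct).\<close>
definition abs_rank :: "(nat \<Rightarrow> real) \<Rightarrow> nat \<Rightarrow> nat \<Rightarrow> nat" where
  "abs_rank x b i = card {j \<in> {1..b}. \<bar>x j\<bar> \<le> \<bar>x i\<bar>}"

definition T_plus :: "(nat \<Rightarrow> real) \<Rightarrow> nat \<Rightarrow> nat" where
  "T_plus x b = (\<Sum>i\<in>{1..b}. abs_rank x b i * (if x i > 0 then 1 else 0))"

definition pos_set :: "(nat \<Rightarrow> real) \<Rightarrow> nat \<Rightarrow> nat set" where
  "pos_set x b = {i \<in> {1..b}. x i > 0}"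

end

theory Submission
  imports Defs
begin

definition Wset :: "(nat \<Rightarrow> real) \<Rightarrow> nat \<Rightarrow> (nat \<times> nat) set" where
  "Wset x b = {p \<in> {1..b} \<times> {1..b}. fst p \<le> snd p \<and> 0 < x (fst p) + x (snd p)}"

lemma T_plus_Wset:
  fixes x :: "nat \<Rightarrow> real"
  assumes nz: "\<And>i. i \<in> {1..b} \<Longrightarrow> x i \<noteq> 0"
    and dist: "\<And>i j. i \<in> {1..b} \<Longrightarrow> j \<in> {1..b} \<Longrightarrow> i \<noteq> j \<Longrightarrow> \<bar>x i\<bar> \<noteq> \<bar>x j\<bar>"
  shows "T_plus x b = card (Wset x b)"
proof -
  define S where "S = (SIGMA i:{1..b}. {j \<in> {1..b}. \<bar>x j\<bar> \<le> \<bar>x i\<bar> \<and> 0 < x i + x j})"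
  have "T_plus x b = (\<Sum>i\<in>{1..b}. card {j \<in> {1..b}. \<bar>x j\<bar> \<le> \<bar>x i\<bar> \<and> 0 < x i + x j})"
    unfolding T_plus_def abs_rank_def
  proof (rule sum.cong[OF refl])
    fix i assume i: "i \<in> {1..b}"
    show "card {j \<in> {1..b}. \<bar>x j\<bar> \<le> \<bar>x i\<bar>} * (if x i > 0 then 1 else 0)
          = card {j \<in> {1..b}. \<bar>x j\<bar> \<le> \<bar>x i\<bar> \<and> 0 < x i + x j}"
    proof (cases "x i > 0")
      case True
      have "{j \<in> {1..b}. \<bar>x j\<bar> \<le> \<bar>x i\<bar>} = {j \<in> {1..b}. \<bar>x j\<bar> \<le> \<bar>x i\<bar> \<and> 0 < x i + x j}"
      proof -
        have "0 < x i + x j" if j: "j \<in> {1..b}" and le: "\<bar>x j\<bar> \<le> \<bar>x i\<bar>" for j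
        proof (cases "j = i")
          case True then show ?thesis using \<open>x i > 0\<close> by simp
        next
          case False
          then have "\<bar>x j\<bar> < \<bar>x i\<bar>" using dist[OF i j] le by fastforce
          then show ?thesis using \<open>x i > 0\<close> by linarith
        qed
        then show ?thesis by blast
      qed
      then show ?thesis using True by simp
    next
      case False
      have "{j \<in> {1..b}. \<bar>x j\<bar> \<le> \<bar>x i\<bar> \<and> 0 < x i + x j} = {}"
        using False by auto
      then show ?thesis using False by simp
    qed
  qed
  also have "\<dots> = card S" unfolding S_def by simp
  also have "card S = card (Wset x b)"
  proof (rule bij_betw_same_card)
    show "bij_betw (\<lambda>(i,j). (min i j, max i j)) S (Wset x b)"
      unfolding bij_betw_def
    proof
      show "inj_on (\<lambda>(i,j). (min i j, max i j)) S"
      proof (rule inj_onI)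
        fix p q
        assume a: "p \<in> S" "q \<in> S" "(\<lambda>(i,j). (min i j, max i j)) p = (\<lambda>(i,j). (min i j, max i j)) q"
        obtain i j where p: "p = (i,j)" by (cases p)
        obtain i' j' where q: "q = (i',j')" by (cases q)
        show "p = q"
        proof (rule ccontr)
          assume ne: "p \<noteq> q"
          then have sw: "i = j'" "j = i'" "i \<noteq> j" using a(3) unfolding p q
            by (auto simp: min_def max_def split: if_splits)
          then show False using a(1,2) dist[of i j] unfolding S_def p q by force
        qed
      qed
    next
      show "(\<lambda>(i,j). (min i j, max i j)) ` S = Wset x b"
      proof
        show "(\<lambda>(i,j). (min i j, max i j)) ` S \<subseteq> Wset x b"
          unfolding S_def Wset_def by (auto simp: min_def max_def)
      next
        show "Wset x b \<subseteq> (\<lambda>(i,j). (min i j, max i j)) ` S"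
        proof clarify
          fix a c assume w: "(a, c) \<in> Wset x b"
          show "(a, c) \<in> (\<lambda>(i,j). (min i j, max i j)) ` S"
          proof (cases "\<bar>x c\<bar> \<le> \<bar>x a\<bar>")
            case True
            then have "(a,c) \<in> S" using w unfolding S_def Wset_def by auto
            moreover have "(a,c) = (min a c, max a c)" using w unfolding Wset_def by auto
            ultimately show ?thesis by force
          next
            case False
            then have "(c,a) \<in> S" using w unfolding S_def Wset_def by auto
            moreover have "(a,c) = (min c a, max c a)" using w unfolding Wset_def by auto
            ultimately show ?thesis by force
          qed
        qed
      qed
    qed
  qed
  finally show ?thesis .
qed

theorem mainTheorem4:
  fixes D :: "nat \<Rightarrow> nat \<Rightarrow> real" and b l :: nat
  assumes "b \<ge> 1"
    and nz: "\<And>m i. m \<in> {l, l+1} \<Longrightarrow> i \<in> {1..b} \<Longrightarrow> D m i \<noteq> 0"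
    and dist: "\<And>m i j. m \<in> {l, l+1} \<Longrightarrow> i \<in> {1..b} \<Longrightarrow> j \<in> {1..b} \<Longrightarrow> i \<noteq> j
                 \<Longrightarrow> \<bar>D m i\<bar> \<noteq> \<bar>D m j\<bar>"
    and mono: "\<And>i. i \<in> {1..b} \<Longrightarrow> D (l+1) i \<le> D l i"
    and sub: "pos_set (D (l+1)) b \<subset> pos_set (D l) b"
  shows "T_plus (D (l+1)) b < T_plus (D l) b"
proof -
  have e1: "T_plus (D (l+1)) b = card (Wset (D (l+1)) b)"
    by (rule T_plus_Wset; use nz[of "l+1"] dist[of "l+1"] in auto)
  have e2: "T_plus (D l) b = card (Wset (D l) b)"
    by (rule T_plus_Wset; use nz[of l] dist[of l] in auto)
  obtain k where k: "k \<in> pos_set (D l) b" "k \<notin> pos_set (D (l+1)) b" using sub by blast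
  have sub2: "Wset (D (l+1)) b \<subseteq> Wset (D l) b"
  proof
    fix p assume p: "p \<in> Wset (D (l+1)) b"
    then have "fst p \<in> {1..b}" "snd p \<in> {1..b}" unfolding Wset_def by auto
    with mono[of "fst p"] mono[of "snd p"] p show "p \<in> Wset (D l) b"
      unfolding Wset_def by auto
  qed
  have "(k,k) \<in> Wset (D l) b" "(k,k) \<notin> Wset (D (l+1)) b"
    using k unfolding pos_set_def Wset_def by auto
  then have "Wset (D (l+1)) b \<subset> Wset (D l) b" using sub2 by blast
  moreover have "finite (Wset (D l) b)" unfolding Wset_def by auto
  ultimately show ?thesis using e1 e2 psubset_card_mono by simp
qed

end
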